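(* Let $U=(\mathbb{R}^2\setminus\{0\})\times\mathbb{R}^{0|1}$ with even coordinates $(p,q)$ and odd coordinate $\tau$. Let $F$ be a superfunction on $U$ of pure parity that is homogeneous of degree $2$, i.e. $\mathcal{E}(F)=2F$. Then for all superfunctions $G,H$ on $U$ of pure parity, $$ \{F,\{G,H\}_{\rm gPb}\} =(-1)^{\sigma(F)}\,\{\{F,G\},H\}_{\rm gPb}+(-1)^{\sigma(F)(\sigma(G)+1)}\,\{G,\{F,H\}\}_{\rm gPb}. $$ In other words, the ghost Poisson bracket is invariant under the action of the conformal Lie superalgebra $\mathcal{K}(1)$ (the space of degree-$2$ homogeneous superfunctions with the Poisson bracket).
   Context: Superfunctions on $U$ are expressions $F=F_0(p,q)+\tau F_1(p,q)$ with $F_0,F_1$ smooth complex-valued functions on $\mathbb{R}^2\setminus\{0\}$, $\tau^2=0$, $\tau$ commuting with $p,q$. Parity: $\sigma(F_0)=0$, $\sigma(\tau F_1)=1$. Partial derivatives $\partial/\partial p,\partial/\partial q$ act coefficientwise, and $\partial(F_0+\tau F_1)/\partial\tau=F_1$. The Euler field is $\mathcal{E}=p\,\partial_p+q\,\partial_q+\tau\,\partial_\tau$. The Poisson bracket is $$\{F,G\}=\frac{\partial F}{\partial p}\frac{\partial G}{\partial q}-\frac{\partial F}{\partial q}\frac{\partial G}{\partial p}+\frac{\partial F}{\partial \tau}\frac{\partial G}{\partial \tau},$$ and the ghost Poisson bracket is the odd operation $$\{F,G\}_{\rm gPb}=\frac{\partial F}{\partial \tau}\,\mathcal{E}(G)-(-1)^{\sigma(F)}\,\mathcal{E}(F)\,\frac{\partial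 G}{\partial \tau}+\tau\left(\frac{\partial F}{\partial p}\frac{\partial G}{\partial q}-\frac{\partial F}{\partial q}\frac{\partial G}{\partial p}\right).$$ *)

theory Defs
  imports "HOL-Analysis.Analysis"
begin

definition U :: "(real \<times> real) set" where
  "U = - {(0, 0)}"

type_synonym cfun = "real \<times> real \<Rightarrow> complex"

text \<open>A superfunction F0 + tau F1 is represented by the pair (F0, F1).\<close>
type_synonym sfun = "cfun \<times> cfun"

definition dP :: "cfun \<Rightarrow> cfun" where
  "dP f = (\<lambda>(p, q). vector_derivative (\<lambda>t. f (t, q)) (at p))"

definition dQ :: "cfun \<Rightarrow> cfun" where
  "dQ f = (\<lambda>(p, q). vector_derivative (\<lambda>t. f (p, t)) (at q))"

text \<open>Smooth (C-infinity) on U: every iterated partial derivative is (Frechet) differentiable on U.\<close>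
definition smooth_on_U :: "cfun \<Rightarrow> bool" where
  "smooth_on_U f \<longleftrightarrow>
     (\<forall>ds :: bool list. (foldr (\<lambda>b g. if b then dP g else dQ g) ds f) differentiable_on U)"

definition superfunction :: "sfun \<Rightarrow> bool" where
  "superfunction F \<longleftrightarrow> smooth_on_U (fst F) \<and> smooth_on_U (snd F)"

definition has_parity :: "sfun \<Rightarrow> nat \<Rightarrow> bool" where
  "has_parity F s \<longleftrightarrow> (s = 0 \<and> (\<forall>x\<in>U. snd F x = 0)) \<or> (s = 1 \<and> (\<forall>x\<in>U. fst F x = 0))"

definition sadd :: "sfun \<Rightarrow> sfun \<Rightarrow> sfun" where
  "sadd A B = ((\<lambda>x. fst A x + fst B x), (\<lambda>x. snd A x + snd B x))"

definition ssub :: "sfun \<Rightarrow> sfun \<Rightarrow> sfun" where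
  "ssub A B = ((\<lambda>x. fst A x - fst B x), (\<lambda>x. snd A x - snd B x))"

definition sscale :: "complex \<Rightarrow> sfun \<Rightarrow> sfun" where
  "sscale c A = ((\<lambda>x. c * fst A x), (\<lambda>x. c * snd A x))"

text \<open>Product using tau^2 = 0 and tau commuting with p, q.\<close>
definition smult :: "sfun \<Rightarrow> sfun \<Rightarrow> sfun" where
  "smult A B = ((\<lambda>x. fst A x * fst B x), (\<lambda>x. fst A x * snd B x + snd A x * fst B x))"

definition sdP :: "sfun \<Rightarrow> sfun" where
  "sdP A = (dP (fst A), dP (snd A))"

definition sdQ :: "sfun \<Rightarrow> sfun" where
  "sdQ A = (dQ (fst A), dQ (snd A))"

definition sdT :: "sfun \<Rightarrow> sfun" where
  "sdT A = (snd A, (\<lambda>x. 0))"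

text \<open>Euler field p d/dp + q d/dq + tau d/dtau.\<close>
definition euler :: "sfun \<Rightarrow> sfun" where
  "euler A = ((\<lambda>(p, q). complex_of_real p * dP (fst A) (p, q) + complex_of_real q * dQ (fst A) (p, q)),
              (\<lambda>(p, q). complex_of_real p * dP (snd A) (p, q) + complex_of_real q * dQ (snd A) (p, q) + snd A (p, q)))"

definition tau :: sfun where
  "tau = ((\<lambda>x. 0), (\<lambda>x. 1))"

definition pb :: "sfun \<Rightarrow> sfun \<Rightarrow> sfun" where
  "pb F G = sadd (ssub (smult (sdP F) (sdQ G)) (smult (sdQ F) (sdP G))) (smult (sdT F) (sdT G))"

text \<open>Ghost Poisson bracket; sF is the parity of F.\<close>
definition gpb :: "nat \<Rightarrow> sfun \<Rightarrow> sfun \<Rightarrow> sfun" where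
  "gpb sF F G = sadd (ssub (smult (sdT F) (euler G)) (sscale ((-1) ^ sF) (smult (euler F) (sdT G))))
                     (smult tau (ssub (smult (sdP F) (sdQ G)) (smult (sdQ F) (sdP G))))"

definition seq_on_U :: "sfun \<Rightarrow> sfun \<Rightarrow> bool" where
  "seq_on_U A B \<longleftrightarrow> (\<forall>x\<in>U. fst A x = fst B x \<and> snd A x = snd B x)"

end

theory Submission
  imports Defs
begin


lemma open_U: "open U" unfolding U_def by (simp add: open_Compl)

lemma dP_eq: "dP f x = vector_derivative (\<lambda>t. f (t, snd x)) (at (fst x))"
  by (cases x) (simp add: dP_def)
lemma dQ_eq: "dQ f x = vector_derivative (\<lambda>t. f (fst x, t)) (at (snd x))"
  by (cases x) (simp add: dQ_def)

definition sp :: "cfun \<Rightarrow> real \<times> real \<Rightarrow> bool" where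
  "sp f x \<longleftrightarrow> (\<lambda>t. f (t, snd x)) differentiable (at (fst x))"
definition sq :: "cfun \<Rightarrow> real \<times> real \<Rightarrow> bool" where
  "sq f x \<longleftrightarrow> (\<lambda>t. f (fst x, t)) differentiable (at (snd x))"

lemma slice_diff:
  assumes "f differentiable (at x)"
  shows "sp f x" "sq f x"
proof -
  have "(\<lambda>t. (t, snd x)) differentiable (at (fst x))"
    by (intro derivative_intros)
  moreover have "f differentiable at ((\<lambda>t. (t, snd x)) (fst x))" using assms by simp
  ultimately have "(f \<circ> (\<lambda>t. (t, snd x))) differentiable (at (fst x))"
    by (rule differentiable_chain_at)
  then show "sp f x" by (simp add: sp_def o_def)
  have "(\<lambda>t. (fst x, t)) differentiable (at (snd x))"
    by (intro derivative_intros)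
  moreover have "f differentiable at ((\<lambda>t. (fst x, t)) (snd x))" using assms by simp
  ultimately have "(f \<circ> (\<lambda>t. (fst x, t))) differentiable (at (snd x))"
    by (rule differentiable_chain_at)
  then show "sq f x" by (simp add: sq_def o_def)
qed

lemma sp_add[simp]: "sp f x \<Longrightarrow> sp g x \<Longrightarrow> sp (\<lambda>y. f y + g y) x"
  by (simp add: sp_def)
lemma sp_diff[simp]: "sp f x \<Longrightarrow> sp g x \<Longrightarrow> sp (\<lambda>y. f y - g y) x"
  by (simp add: sp_def)
lemma sp_mult[simp]: "sp f x \<Longrightarrow> sp g x \<Longrightarrow> sp (\<lambda>y. f y * g y) x"
  by (simp add: sp_def)
lemma sp_const[simp]: "sp (\<lambda>y. c) x"
  by (simp add: sp_def)
lemma ofr_diff[simp]: "(\<lambda>t. complex_of_real t) differentiable at a"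
  by (simp add: bounded_linear_imp_differentiable[OF bounded_linear_of_real])
lemma sp_fst[simp]: "sp (\<lambda>y. complex_of_real (fst y)) x"
  unfolding sp_def by simp
lemma sp_snd[simp]: "sp (\<lambda>y. complex_of_real (snd y)) x"
  unfolding sp_def by simp
lemma sq_add[simp]: "sq f x \<Longrightarrow> sq g x \<Longrightarrow> sq (\<lambda>y. f y + g y) x"
  by (simp add: sq_def)
lemma sq_diff[simp]: "sq f x \<Longrightarrow> sq g x \<Longrightarrow> sq (\<lambda>y. f y - g y) x"
  by (simp add: sq_def)
lemma sq_mult[simp]: "sq f x \<Longrightarrow> sq g x \<Longrightarrow> sq (\<lambda>y. f y * g y) x"
  by (simp add: sq_def)
lemma sq_const[simp]: "sq (\<lambda>y. c) x"
  by (simp add: sq_def)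
lemma sq_fst[simp]: "sq (\<lambda>y. complex_of_real (fst y)) x"
  unfolding sq_def by simp
lemma sq_snd[simp]: "sq (\<lambda>y. complex_of_real (snd y)) x"
  unfolding sq_def by simp

lemma dP_add[simp]: "sp f x \<Longrightarrow> sp g x \<Longrightarrow> dP (\<lambda>y. f y + g y) x = dP f x + dP g x"
  by (simp add: sp_def dP_eq)
lemma dP_diff[simp]: "sp f x \<Longrightarrow> sp g x \<Longrightarrow> dP (\<lambda>y. f y - g y) x = dP f x - dP g x"
  by (simp add: sp_def dP_eq)
lemma dP_mult[simp]: "sp f x \<Longrightarrow> sp g x \<Longrightarrow> dP (\<lambda>y. f y * g y) x = f x * dP g x + dP f x * g x"
  by (simp add: sp_def dP_eq)
lemma dP_const[simp]: "dP (\<lambda>y. c) x = 0"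
  by (simp add: dP_eq)
lemma dP_fst[simp]: "dP (\<lambda>y. complex_of_real (fst y)) x = 1"
  unfolding dP_eq by (rule vector_derivative_at) (auto intro!: derivative_eq_intros)
lemma dP_snd[simp]: "dP (\<lambda>y. complex_of_real (snd y)) x = 0"
  unfolding dP_eq by simp
lemma dQ_add[simp]: "sq f x \<Longrightarrow> sq g x \<Longrightarrow> dQ (\<lambda>y. f y + g y) x = dQ f x + dQ g x"
  by (simp add: sq_def dQ_eq)
lemma dQ_diff[simp]: "sq f x \<Longrightarrow> sq g x \<Longrightarrow> dQ (\<lambda>y. f y - g y) x = dQ f x - dQ g x"
  by (simp add: sq_def dQ_eq)
lemma dQ_mult[simp]: "sq f x \<Longrightarrow> sq g x \<Longrightarrow> dQ (\<lambda>y. f y * g y) x = f x * dQ g x + dQ f x * g x"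
  by (simp add: sq_def dQ_eq)
lemma dQ_const[simp]: "dQ (\<lambda>y. c) x = 0"
  by (simp add: dQ_eq)
lemma dQ_snd[simp]: "dQ (\<lambda>y. complex_of_real (snd y)) x = 1"
  unfolding dQ_eq by (rule vector_derivative_at) (auto intro!: derivative_eq_intros)
lemma dQ_fst[simp]: "dQ (\<lambda>y. complex_of_real (fst y)) x = 0"
  unfolding dQ_eq by simp

lemma vd_cong:
  assumes "open S" "a \<in> S" "\<And>t. t \<in> S \<Longrightarrow> f t = g t"
  shows "vector_derivative f (at a) = vector_derivative g (at a)"
proof -
  have "\<And>v. (f has_vector_derivative v) (at a) \<longleftrightarrow> (g has_vector_derivative v) (at a)"
    using assms has_vector_derivative_transform_within_open[of _ _ a S] by metis
  then show ?thesis unfolding vector_derivative_def by simp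
qed

lemma openP: "open {t. (t, b) \<in> U}"
proof (cases "b = 0")
  case True
  then have "{t. (t, b) \<in> U} = -{0}" by (auto simp: U_def)
  then show ?thesis by (simp add: open_Compl)
next
  case False
  then have "{t. (t, b) \<in> U} = UNIV" by (auto simp: U_def)
  then show ?thesis by simp
qed
lemma openQ: "open {t. (a, t) \<in> U}"
proof (cases "a = 0")
  case True
  then have "{t. (a, t) \<in> U} = -{0}" by (auto simp: U_def)
  then show ?thesis by (simp add: open_Compl)
next
  case False
  then have "{t. (a, t) \<in> U} = UNIV" by (auto simp: U_def)
  then show ?thesis by simp
qed

lemma dP_cong:
  assumes "\<forall>y\<in>U. f y = g y" "x \<in> U"
  shows "dP f x = dP g x"
  unfolding dP_eq by (rule vd_cong[OF openP[of "snd x"]]) (use assms in auto)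
lemma dQ_cong:
  assumes "\<forall>y\<in>U. f y = g y" "x \<in> U"
  shows "dQ f x = dQ g x"
  unfolding dQ_eq by (rule vd_cong[OF openQ[of "fst x"]]) (use assms in auto)



lemma mixed_bound:
  fixes g gp gpq :: "real \<Rightarrow> real \<Rightarrow> complex"
  assumes dg: "\<And>s t. s \<in> closed_segment a (a+h) \<Longrightarrow> t \<in> closed_segment b (b+k) \<Longrightarrow>
                 ((\<lambda>s. g s t) has_vector_derivative gp s t) (at s)"
    and dgp: "\<And>s t. s \<in> closed_segment a (a+h) \<Longrightarrow> t \<in> closed_segment b (b+k) \<Longrightarrow>
                 ((\<lambda>t. gp s t) has_vector_derivative gpq s t) (at t)"
    and bd: "\<And>s t. s \<in> closed_segment a (a+h) \<Longrightarrow> t \<in> closed_segment b (b+k) \<Longrightarrow>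
                 norm (gpq s t - M) \<le> e"
  shows "norm (g (a+h) (b+k) - g (a+h) b - g a (b+k) + g a b - of_real (h*k) * M) \<le> 11*e*\<bar>h\<bar>*\<bar>k\<bar>"
proof -
  let ?I = "closed_segment a (a+h)" and ?J = "closed_segment b (b+k)"
  have bJ: "b \<in> ?J" and bkJ: "b+k \<in> ?J" by auto
  have aI: "a \<in> ?I" and ahI: "a+h \<in> ?I" by auto
  have e0: "0 \<le> e" using bd[OF aI bJ] norm_ge_zero order_trans by blast
  have step1: "norm (gp s (b+k) - gp s b - of_real k * gpq s b) \<le> \<bar>k\<bar> * (2*e)"
    if s: "s \<in> ?I" for s
  proof -
    have "norm (gp s (b+k) - gp s b - (b + k - b) *\<^sub>R gpq s b) \<le> norm (b + k - b) * (2*e)"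
    proof (rule vector_differentiable_bound_linearization[where S="?J"])
      show "\<And>x. x \<in> ?J \<Longrightarrow> ((gp s) has_vector_derivative gpq s x) (at x within ?J)"
        using dgp[OF s] has_vector_derivative_at_within by blast
      show "closed_segment b (b+k) \<subseteq> ?J" by simp
      show "b \<in> ?J" by simp
      fix t assume t: "t \<in> ?J"
      have "norm (gpq s t - gpq s b) \<le> norm (gpq s t - M) + norm (gpq s b - M)"
        by (rule order_trans[OF _ norm_triangle_ineq4]) simp
      also have "\<dots> \<le> 2*e" using bd[OF s t] bd[OF s bJ] by simp
      finally show "norm (gpq s t - gpq s b) \<le> 2*e" .
    qed
    then show ?thesis by (simp add: scaleR_conv_of_real)
  qed
  define phi where "phi s = g s (b+k) - g s b - of_real s * of_real k * M" for s
  define phi' where "phi' s = gp s (b+k) - gp s b - of_real k * M" for s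
  have dphi: "(phi has_vector_derivative phi' s) (at s within ?I)" if s: "s \<in> ?I" for s
  proof -
    have "((\<lambda>s. g s (b+k) - g s b - of_real s * of_real k * M) has_vector_derivative
            gp s (b+k) - gp s b - 1 * of_real k * M) (at s)"
    proof (intro has_vector_derivative_diff dg[OF s bkJ] dg[OF s bJ])
      show "((\<lambda>s. complex_of_real s * complex_of_real k * M) has_vector_derivative 1 * complex_of_real k * M) (at s)"
        unfolding has_vector_derivative_def
        by (auto intro!: derivative_eq_intros simp: scaleR_conv_of_real)
    qed
    then show ?thesis unfolding phi_def phi'_def
      by (simp add: has_vector_derivative_at_within)
  qed
  have phib: "norm (phi' s - phi' a) \<le> 6*e*\<bar>k\<bar>" if s: "s \<in> ?I" for s
  proof -
    have "phi' s - phi' a = (gp s (b+k) - gp s b - of_real k * gpq s b)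
        - (gp a (b+k) - gp a b - of_real k * gpq a b) + of_real k * (gpq s b - M) - of_real k * (gpq a b - M)"
      unfolding phi'_def by (simp add: algebra_simps)
    also have "norm \<dots> \<le> \<bar>k\<bar> * (2*e) + \<bar>k\<bar> * (2*e) + \<bar>k\<bar> * e + \<bar>k\<bar> * e"
      apply (rule order_trans[OF norm_triangle_ineq4])
      apply (rule add_mono)
       apply (rule order_trans[OF norm_triangle_ineq])
       apply (rule add_mono)
        apply (rule order_trans[OF norm_triangle_ineq4])
        apply (rule add_mono)
         apply (rule step1[OF s])
        apply (rule step1[OF aI])
       apply (simp add: norm_mult) apply (rule mult_left_mono[OF bd[OF s bJ]]) apply simp
      apply (simp add: norm_mult) apply (rule mult_left_mono[OF bd[OF aI bJ]]) apply simp
      done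
    finally show ?thesis by simp
  qed
  have "norm (phi (a+h) - phi a - (a + h - a) *\<^sub>R phi' a) \<le> norm (a + h - a) * (6*e*\<bar>k\<bar>)"
    by (rule vector_differentiable_bound_linearization[where S="?I"]) (use dphi phib aI in auto)
  then have A: "norm (phi (a+h) - phi a - of_real h * phi' a) \<le> \<bar>h\<bar> * (6*e*\<bar>k\<bar>)"
    by (simp add: scaleR_conv_of_real)
  have B: "norm (of_real h * phi' a) \<le> \<bar>h\<bar> * (5*e*\<bar>k\<bar>)"
  proof -
    have "phi' a = (gp a (b+k) - gp a b - of_real k * gpq a b) + of_real k * (gpq a b - M)"
      unfolding phi'_def by (simp add: algebra_simps)
    also have "norm \<dots> \<le> norm (gp a (b+k) - gp a b - of_real k * gpq a b) + norm (of_real k * (gpq a b - M))"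
      by (rule norm_triangle_ineq)
    also have "\<dots> \<le> \<bar>k\<bar> * (2*e) + \<bar>k\<bar> * e"
      apply (rule add_mono[OF step1[OF aI]])
      apply (simp add: norm_mult) apply (rule mult_left_mono[OF bd[OF aI bJ]]) apply simp
      done
    finally have "norm (phi' a) \<le> \<bar>k\<bar> * (3*e)" by (simp add: algebra_simps)
    then have "\<bar>h\<bar> * norm (phi' a) \<le> \<bar>h\<bar> * (\<bar>k\<bar> * (3*e))"
      by (intro mult_left_mono) auto
    also have "\<dots> \<le> \<bar>h\<bar> * (5*e*\<bar>k\<bar>)"
      using e0 by (intro mult_left_mono) (auto simp: mult_right_mono)
    finally show ?thesis by (simp add: norm_mult)
  qed
  have "g (a+h) (b+k) - g (a+h) b - g a (b+k) + g a b - of_real (h*k) * M = phi (a+h) - phi a"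
    unfolding phi_def by (simp add: algebra_simps)
  also have "norm \<dots> \<le> \<bar>h\<bar> * (6*e*\<bar>k\<bar>) + \<bar>h\<bar> * (5*e*\<bar>k\<bar>)"
    using A B norm_triangle_ineq[of "phi (a+h) - phi a - of_real h * phi' a" "of_real h * phi' a"]
    by (simp only: diff_add_cancel)
  finally show ?thesis by (simp add: algebra_simps)
qed



lemma hvdP: "g differentiable (at (s,t)) \<Longrightarrow> ((\<lambda>u. g (u,t)) has_vector_derivative dP g (s,t)) (at s)"
  using slice_diff(1)[of g "(s,t)"] by (simp add: sp_def dP_eq vector_derivative_works)
lemma hvdQ: "g differentiable (at (s,t)) \<Longrightarrow> ((\<lambda>u. g (s,u)) has_vector_derivative dQ g (s,t)) (at t)"
  using slice_diff(2)[of g "(s,t)"] by (simp add: sq_def dQ_eq vector_derivative_works)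

lemma schwarz:
  assumes dg: "g differentiable_on U" and dgp: "dP g differentiable_on U" and dgq: "dQ g differentiable_on U"
    and c1: "continuous_on U (dQ (dP g))" and c2: "continuous_on U (dP (dQ g))"
    and x: "x \<in> U"
  shows "dP (dQ g) x = dQ (dP g) x"
proof (rule ccontr)
  obtain a b where xab: "x = (a,b)" by (cases x)
  define M where "M = dQ (dP g) x"
  define N where "N = dP (dQ g) x"
  assume "\<not> ?thesis"
  then have "M \<noteq> N" by (simp add: M_def N_def)
  define e where "e = norm (M - N) / 24"
  have e: "e > 0" using \<open>M \<noteq> N\<close> by (simp add: e_def)
  have "isCont (dQ (dP g)) x" using c1 x open_U continuous_on_eq_continuous_at by blast
  then obtain d1 where d1: "d1 > 0" "\<And>y. dist y x < d1 \<Longrightarrow> dist (dQ (dP g) y) M < e"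
    using e unfolding continuous_at_eps_delta M_def by blast
  have "isCont (dP (dQ g)) x" using c2 x open_U continuous_on_eq_continuous_at by blast
  then obtain d2 where d2: "d2 > 0" "\<And>y. dist y x < d2 \<Longrightarrow> dist (dP (dQ g) y) N < e"
    using e unfolding continuous_at_eps_delta N_def by blast
  obtain d3 where d3: "d3 > 0" "ball x d3 \<subseteq> U" using open_U x open_contains_ball by blast
  define d where "d = min d1 (min d2 d3)"
  have d: "d > 0" "d \<le> d1" "d \<le> d2" "d \<le> d3" using d1 d2 d3 by (auto simp: d_def)
  define h where "h = d / 2"
  have h: "h > 0" using d by (simp add: h_def)
  have near: "dist (s,t) x < d" if "s \<in> {a..a+h}" "t \<in> {b..b+h}" for s t
  proof -
    have "dist (s,t) x = sqrt ((s-a)^2 + (t-b)^2)"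
      by (simp add: xab dist_Pair_Pair dist_real_def)
    also have "\<dots> \<le> sqrt (h^2 + h^2)"
      using that h by (intro real_sqrt_le_mono add_mono power_mono) auto
    also have "\<dots> = sqrt 2 * h" by (simp add: real_sqrt_mult h less_imp_le)
    also have "\<dots> < 2 * h" using h by (simp add: sqrt2_less_2)
    finally show ?thesis by (simp add: h_def)
  qed
  have inU: "(s,t) \<in> U" if "s \<in> {a..a+h}" "t \<in> {b..b+h}" for s t
    using near[OF that] d d3 by (auto simp: dist_commute)
  have dat: "\<And>f y. f differentiable_on U \<Longrightarrow> y \<in> U \<Longrightarrow> f differentiable (at y)"
    using open_U differentiable_on_eq_differentiable_at by blast
  have segI: "closed_segment a (a+h) = {a..a+h}" "closed_segment b (b+h) = {b..b+h}"
    using h by (auto simp: closed_segment_eq_real_ivl)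
  have B1: "norm (g (a+h, b+h) - g (a+h, b) - g (a, b+h) + g (a, b) - of_real (h*h) * M) \<le> 11*e*\<bar>h\<bar>*\<bar>h\<bar>"
    using mixed_bound[of a h b h "\<lambda>s t. g (s,t)" "\<lambda>s t. dP g (s,t)" "\<lambda>s t. dQ (dP g) (s,t)" M e]
  proof (unfold segI)
    assume r: "(\<And>s t. s \<in> {a..a + h} \<Longrightarrow> t \<in> {b..b + h} \<Longrightarrow> ((\<lambda>s. g (s, t)) has_vector_derivative dP g (s, t)) (at s)) \<Longrightarrow>
    (\<And>s t. s \<in> {a..a + h} \<Longrightarrow> t \<in> {b..b + h} \<Longrightarrow> ((\<lambda>t. dP g (s, t)) has_vector_derivative dQ (dP g) (s, t)) (at t)) \<Longrightarrow>
    (\<And>s t. s \<in> {a..a + h} \<Longrightarrow> t \<in> {b..b + h} \<Longrightarrow> cmod (dQ (dP g) (s, t) - M) \<le> e) \<Longrightarrow>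
    cmod (g (a + h, b + h) - g (a + h, b) - g (a, b + h) + g (a, b) - complex_of_real (h * h) * M) \<le> 11 * e * \<bar>h\<bar> * \<bar>h\<bar>"
    show ?thesis
    proof (rule r)
      fix s t assume st: "s \<in> {a..a + h}" "t \<in> {b..b + h}"
      show "((\<lambda>s. g (s, t)) has_vector_derivative dP g (s, t)) (at s)"
        by (rule hvdP, rule dat[OF dg inU[OF st]])
      show "((\<lambda>t. dP g (s, t)) has_vector_derivative dQ (dP g) (s, t)) (at t)"
        by (rule hvdQ, rule dat[OF dgp inU[OF st]])
      have "dist (dQ (dP g) (s,t)) M < e" using d1(2) near[OF st] d by simp
      then show "cmod (dQ (dP g) (s, t) - M) \<le> e" by (simp add: dist_norm)
    qed
  qed
  have B2: "norm (g (a+h, b+h) - g (a, b+h) - g (a+h, b) + g (a, b) - of_real (h*h) * N) \<le> 11*e*\<bar>h\<bar>*\<bar>h\<bar>"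
    using mixed_bound[of b h a h "\<lambda>s t. g (t,s)" "\<lambda>s t. dQ g (t,s)" "\<lambda>s t. dP (dQ g) (t,s)" N e]
  proof (unfold segI)
    assume r: "(\<And>s t. s \<in> {b..b + h} \<Longrightarrow> t \<in> {a..a + h} \<Longrightarrow> ((\<lambda>s. g (t, s)) has_vector_derivative dQ g (t, s)) (at s)) \<Longrightarrow>
    (\<And>s t. s \<in> {b..b + h} \<Longrightarrow> t \<in> {a..a + h} \<Longrightarrow> ((\<lambda>t. dQ g (t, s)) has_vector_derivative dP (dQ g) (t, s)) (at t)) \<Longrightarrow>
    (\<And>s t. s \<in> {b..b + h} \<Longrightarrow> t \<in> {a..a + h} \<Longrightarrow> cmod (dP (dQ g) (t, s) - N) \<le> e) \<Longrightarrow>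
    cmod (g (a + h, b + h) - g (a, b + h) - g (a + h, b) + g (a, b) - complex_of_real (h * h) * N) \<le> 11 * e * \<bar>h\<bar> * \<bar>h\<bar>"
    show ?thesis
    proof (rule r)
      fix s t assume st: "s \<in> {b..b + h}" "t \<in> {a..a + h}"
      show "((\<lambda>s. g (t, s)) has_vector_derivative dQ g (t, s)) (at s)"
        by (rule hvdQ, rule dat[OF dg inU[OF st(2,1)]])
      show "((\<lambda>t. dQ g (t, s)) has_vector_derivative dP (dQ g) (t, s)) (at t)"
        by (rule hvdP, rule dat[OF dgq inU[OF st(2,1)]])
      have "dist (dP (dQ g) (t,s)) N < e" using d2(2) near[OF st(2,1)] d by simp
      then show "cmod (dP (dQ g) (t, s) - N) \<le> e" by (simp add: dist_norm)
    qed
  qed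
  define D where "D = g (a+h, b+h) - g (a+h, b) - g (a, b+h) + g (a, b)"
  have "of_real (h*h) * (M - N) = (D - of_real (h*h) * N) - (D - of_real (h*h) * M)"
    by (simp add: algebra_simps)
  then have "norm (of_real (h*h) * (M - N)) \<le> norm (D - of_real (h*h) * N) + norm (D - of_real (h*h) * M)"
    by (metis norm_triangle_ineq4)
  also have "\<dots> \<le> 11*e*\<bar>h\<bar>*\<bar>h\<bar> + 11*e*\<bar>h\<bar>*\<bar>h\<bar>"
    using B1 B2 unfolding D_def by (intro add_mono) (auto simp: algebra_simps)
  also have "\<dots> = (h*h) * (22*e)" using h by (simp add: algebra_simps)
  also have "norm (of_real (h*h) * (M - N)) = (h*h) * norm (M - N)"
    by (simp add: norm_mult)
  finally have "(h*h) * norm (M - N) \<le> (h*h) * (22*e)" .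
  then have "norm (M - N) \<le> 22 * e" using h by (simp add: mult_le_cancel_left_pos)
  then show False using e by (simp add: e_def)
qed



lemma smooth_facts:
  assumes "smooth_on_U f" "x \<in> U"
  shows "sp f x" "sq f x" "sp (dP f) x" "sq (dP f) x" "sp (dQ f) x" "sq (dQ f) x"
    "dP (dQ f) x = dQ (dP f) x"
proof -
  have D: "(foldr (\<lambda>b g. if b then dP g else dQ g) ds f) differentiable_on U" for ds
    using assms(1) unfolding smooth_on_U_def by blast
  have d0: "f differentiable_on U" using D[of "[]"] by simp
  have d1: "dP f differentiable_on U" using D[of "[True]"] by simp
  have d2: "dQ f differentiable_on U" using D[of "[False]"] by simp
  have d3: "dQ (dP f) differentiable_on U" using D[of "[False, True]"] by simp
  have d4: "dP (dQ f) differentiable_on U" using D[of "[True, False]"] by simp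
  have dat: "\<And>f. f differentiable_on U \<Longrightarrow> f differentiable (at x)"
    using open_U differentiable_on_eq_differentiable_at assms(2) by blast
  show "sp f x" "sq f x" using slice_diff dat[OF d0] by auto
  show "sp (dP f) x" "sq (dP f) x" using slice_diff dat[OF d1] by auto
  show "sp (dQ f) x" "sq (dQ f) x" using slice_diff dat[OF d2] by auto
  show "dP (dQ f) x = dQ (dP f) x"
    by (rule schwarz[OF d0 d1 d2 differentiable_imp_continuous_on[OF d3] differentiable_imp_continuous_on[OF d4] assms(2)])
qed

lemma zero_facts:
  assumes "\<forall>y\<in>U. f y = 0" "x \<in> U"
  shows "f x = 0" "dP f x = 0" "dQ f x = 0" "dP (dP f) x = 0" "dQ (dP f) x = 0"
    "dP (dQ f) x = 0" "dQ (dQ f) x = 0"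
proof -
  have p: "\<forall>y\<in>U. dP f y = 0" using dP_cong[OF assms(1)] by simp
  have q: "\<forall>y\<in>U. dQ f y = 0" using dQ_cong[OF assms(1)] by simp
  show "f x = 0" using assms by simp
  show "dP f x = 0" "dQ f x = 0" using p q assms(2) by auto
  show "dP (dP f) x = 0" "dQ (dP f) x = 0" using dP_cong[OF p assms(2)] dQ_cong[OF p assms(2)] by auto
  show "dP (dQ f) x = 0" "dQ (dQ f) x = 0" using dP_cong[OF q assms(2)] dQ_cong[OF q assms(2)] by auto
qed

lemma euler_alt: "euler A = ((\<lambda>y. complex_of_real (fst y) * dP (fst A) y + complex_of_real (snd y) * dQ (fst A) y),
   (\<lambda>y. complex_of_real (fst y) * dP (snd A) y + complex_of_real (snd y) * dQ (snd A) y + snd A y))"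
  by (simp add: euler_def case_prod_beta')

lemmas ops = pb_def gpb_def sadd_def ssub_def sscale_def smult_def sdP_def sdQ_def sdT_def euler_alt tau_def

lemma hom_facts:
  assumes sF: "superfunction F" and hom: "seq_on_U (euler F) (sscale 2 F)" and x: "x \<in> U"
  shows "complex_of_real (fst x) * dP (fst F) x + complex_of_real (snd x) * dQ (fst F) x = 2 * fst F x"
    "complex_of_real (fst x) * dP (snd F) x + complex_of_real (snd x) * dQ (snd F) x + snd F x = 2 * snd F x"
    "dP (\<lambda>y. complex_of_real (fst y) * dP (fst F) y + complex_of_real (snd y) * dQ (fst F) y) x = dP (\<lambda>y. 2 * fst F y) x"
    "dQ (\<lambda>y. complex_of_real (fst y) * dP (fst F) y + complex_of_real (snd y) * dQ (fst F) y) x = dQ (\<lambda>y. 2 * fst F y) x"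
    "dP (\<lambda>y. complex_of_real (fst y) * dP (snd F) y + complex_of_real (snd y) * dQ (snd F) y + snd F y) x = dP (\<lambda>y. 2 * snd F y) x"
    "dQ (\<lambda>y. complex_of_real (fst y) * dP (snd F) y + complex_of_real (snd y) * dQ (snd F) y + snd F y) x = dQ (\<lambda>y. 2 * snd F y) x"
proof -
  have h1: "\<forall>y\<in>U. complex_of_real (fst y) * dP (fst F) y + complex_of_real (snd y) * dQ (fst F) y = 2 * fst F y"
    using hom by (simp add: seq_on_U_def euler_alt sscale_def)
  have h2: "\<forall>y\<in>U. complex_of_real (fst y) * dP (snd F) y + complex_of_real (snd y) * dQ (snd F) y + snd F y = 2 * snd F y"
    using hom by (simp add: seq_on_U_def euler_alt sscale_def)
  show "complex_of_real (fst x) * dP (fst F) x + complex_of_real (snd x) * dQ (fst F) x = 2 * fst F x"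
    "complex_of_real (fst x) * dP (snd F) x + complex_of_real (snd x) * dQ (snd F) x + snd F x = 2 * snd F x"
    using h1 h2 x by auto
  show "dP (\<lambda>y. complex_of_real (fst y) * dP (fst F) y + complex_of_real (snd y) * dQ (fst F) y) x = dP (\<lambda>y. 2 * fst F y) x"
    "dQ (\<lambda>y. complex_of_real (fst y) * dP (fst F) y + complex_of_real (snd y) * dQ (fst F) y) x = dQ (\<lambda>y. 2 * fst F y) x"
    using dP_cong[OF h1 x] dQ_cong[OF h1 x] by auto
  show "dP (\<lambda>y. complex_of_real (fst y) * dP (snd F) y + complex_of_real (snd y) * dQ (snd F) y + snd F y) x = dP (\<lambda>y. 2 * snd F y) x"
    "dQ (\<lambda>y. complex_of_real (fst y) * dP (snd F) y + complex_of_real (snd y) * dQ (snd F) y + snd F y) x = dQ (\<lambda>y. 2 * snd F y) x"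
    using dP_cong[OF h2 x] dQ_cong[OF h2 x] by auto
qed

theorem theorem1:
  fixes F G H :: sfun and sF sG sH :: nat
  assumes "superfunction F" "superfunction G" "superfunction H"
    and "has_parity F sF" "has_parity G sG" "has_parity H sH"
    and "seq_on_U (euler F) (sscale 2 F)"
  shows "seq_on_U (pb F (gpb sG G H))
           (sadd (sscale ((-1) ^ sF) (gpb ((sF + sG) mod 2) (pb F G) H))
                 (sscale ((-1) ^ (sF * (sG + 1))) (gpb sG G (pb F H))))"
  unfolding seq_on_U_def
proof (intro ballI)
  fix x assume x: "x \<in> U"
  note sm = smooth_facts[OF _ x]
  note hf = hom_facts[OF assms(1) assms(7) x]
  have S: "smooth_on_U (fst F)" "smooth_on_U (snd F)" "smooth_on_U (fst G)" "smooth_on_U (snd G)"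
     "smooth_on_U (fst H)" "smooth_on_U (snd H)" using assms(1-3) by (auto simp: superfunction_def)
  note smF = sm[OF S(1)] sm[OF S(2)]
  have ha: "dP (fst F) x = complex_of_real (fst x) * dP (dP (fst F)) x + complex_of_real (snd x) * dQ (dP (fst F)) x"
  proof -
    have "dP (\<lambda>y. complex_of_real (fst y) * dP (fst F) y + complex_of_real (snd y) * dQ (fst F) y) x
      = (complex_of_real (fst x) * dP (dP (fst F)) x + complex_of_real (snd x) * dQ (dP (fst F)) x) + dP (fst F) x"
      by (simp add: smF)
    moreover have "dP (\<lambda>y. 2 * fst F y) x = 2 * dP (fst F) x" by (simp add: smF)
    ultimately show ?thesis using hf(3) by simp
  qed
  have hb: "dQ (fst F) x = complex_of_real (fst x) * dQ (dP (fst F)) x + complex_of_real (snd x) * dQ (dQ (fst F)) x"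
  proof -
    have "dQ (\<lambda>y. complex_of_real (fst y) * dP (fst F) y + complex_of_real (snd y) * dQ (fst F) y) x
      = (complex_of_real (fst x) * dQ (dP (fst F)) x + complex_of_real (snd x) * dQ (dQ (fst F)) x) + dQ (fst F) x"
      by (simp add: smF)
    moreover have "dQ (\<lambda>y. 2 * fst F y) x = 2 * dQ (fst F) x" by (simp add: smF)
    ultimately show ?thesis using hf(4) by simp
  qed
  have hc: "snd F x = complex_of_real (fst x) * dP (snd F) x + complex_of_real (snd x) * dQ (snd F) x"
    using hf(2) by simp
  have hd: "complex_of_real (fst x) * dP (dP (snd F)) x + complex_of_real (snd x) * dQ (dP (snd F)) x = 0"
  proof -
    have "dP (\<lambda>y. complex_of_real (fst y) * dP (snd F) y + complex_of_real (snd y) * dQ (snd F) y + snd F y) x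
      = (complex_of_real (fst x) * dP (dP (snd F)) x + complex_of_real (snd x) * dQ (dP (snd F)) x) + 2 * dP (snd F) x"
      by (simp add: smF)
    moreover have "dP (\<lambda>y. 2 * snd F y) x = 2 * dP (snd F) x" by (simp add: smF)
    ultimately show ?thesis using hf(5) by simp
  qed
  have he: "complex_of_real (fst x) * dQ (dP (snd F)) x + complex_of_real (snd x) * dQ (dQ (snd F)) x = 0"
  proof -
    have "dQ (\<lambda>y. complex_of_real (fst y) * dP (snd F) y + complex_of_real (snd y) * dQ (snd F) y + snd F y) x
      = (complex_of_real (fst x) * dQ (dP (snd F)) x + complex_of_real (snd x) * dQ (dQ (snd F)) x) + 2 * dQ (snd F) x"
      by (simp add: smF)
    moreover have "dQ (\<lambda>y. 2 * snd F y) x = 2 * dQ (snd F) x" by (simp add: smF)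
    ultimately show ?thesis using hf(6) by simp
  qed
  show "fst (pb F (gpb sG G H)) x = fst
           (sadd (sscale ((-1) ^ sF) (gpb ((sF + sG) mod 2) (pb F G) H))
                 (sscale ((-1) ^ (sF * (sG + 1))) (gpb sG G (pb F H)))) x \<and>
        snd (pb F (gpb sG G H)) x = snd
           (sadd (sscale ((-1) ^ sF) (gpb ((sF + sG) mod 2) (pb F G) H))
                 (sscale ((-1) ^ (sF * (sG + 1))) (gpb sG G (pb F H)))) x"
  proof -
    from assms(4) have "(sF = 0 \<and> (\<forall>y\<in>U. snd F y = 0)) \<or> (sF = 1 \<and> (\<forall>y\<in>U. fst F y = 0))"
      by (simp add: has_parity_def)
    moreover from assms(5) have "(sG = 0 \<and> (\<forall>y\<in>U. snd G y = 0)) \<or> (sG = 1 \<and> (\<forall>y\<in>U. fst G y = 0))"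
      by (simp add: has_parity_def)
    ultimately show ?thesis
    proof (elim disjE conjE)
      assume a: "sF = 0" "\<forall>y\<in>U. snd F y = 0" "sG = 0" "\<forall>y\<in>U. snd G y = 0"
      note z = zero_facts[OF a(2) x] zero_facts[OF a(4) x]
      show ?thesis
        unfolding a(1,3) apply (simp add: ops sm[OF S(1)] sm[OF S(2)] sm[OF S(3)] sm[OF S(4)] sm[OF S(5)] sm[OF S(6)] z)
        apply (simp only: ha hb)
        apply (rule conjI)
        apply algebra
        apply algebra
        done
    next
      assume a: "sF = 0" "\<forall>y\<in>U. snd F y = 0" "sG = 1" "\<forall>y\<in>U. fst G y = 0"
      note z = zero_facts[OF a(2) x] zero_facts[OF a(4) x]
      show ?thesis
        unfolding a(1,3) apply (simp add: ops sm[OF S(1)] sm[OF S(2)] sm[OF S(3)] sm[OF S(4)] sm[OF S(5)] sm[OF S(6)] z)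
        apply (simp only: ha hb)
        apply (rule conjI)
        apply algebra
        apply algebra
        done
    next
      assume a: "sF = 1" "\<forall>y\<in>U. fst F y = 0" "sG = 0" "\<forall>y\<in>U. snd G y = 0"
      note z = zero_facts[OF a(2) x] zero_facts[OF a(4) x]
      have "fst x \<noteq> 0 \<or> snd x \<noteq> 0" using x by (cases x) (auto simp: U_def)
      then show ?thesis
      proof
        assume p: "fst x \<noteq> 0"
        have h1: "dQ (dP (snd F)) x = - (complex_of_real (snd x) * dQ (dQ (snd F)) x) / complex_of_real (fst x)"
          using he p by (simp add: field_simps eq_neg_iff_add_eq_0)
        have h2: "dP (dP (snd F)) x = - (complex_of_real (snd x) * dQ (dP (snd F)) x) / complex_of_real (fst x)"
          using hd p by (simp add: field_simps eq_neg_iff_add_eq_0)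
        show ?thesis
          unfolding a(1,3) apply (simp add: ops sm[OF S(1)] sm[OF S(2)] sm[OF S(3)] sm[OF S(4)] sm[OF S(5)] sm[OF S(6)] z)
          apply (simp only: hc h2)
          apply (simp only: h1)
          using p by (simp add: field_simps)
      next
        assume q: "snd x \<noteq> 0"
        have h1: "dQ (dP (snd F)) x = - (complex_of_real (fst x) * dP (dP (snd F)) x) / complex_of_real (snd x)"
          using hd q by (simp add: field_simps eq_neg_iff_add_eq_0)
        have h2: "dQ (dQ (snd F)) x = - (complex_of_real (fst x) * dQ (dP (snd F)) x) / complex_of_real (snd x)"
          using he q by (simp add: field_simps eq_neg_iff_add_eq_0)
        show ?thesis
          unfolding a(1,3) apply (simp add: ops sm[OF S(1)] sm[OF S(2)] sm[OF S(3)] sm[OF S(4)] sm[OF S(5)] sm[OF S(6)] z)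
          apply (simp only: hc h2)
          apply (simp only: h1)
          using q by (simp add: field_simps)
      qed
    next
      assume a: "sF = 1" "\<forall>y\<in>U. fst F y = 0" "sG = 1" "\<forall>y\<in>U. fst G y = 0"
      note z = zero_facts[OF a(2) x] zero_facts[OF a(4) x]
      have "fst x \<noteq> 0 \<or> snd x \<noteq> 0" using x by (cases x) (auto simp: U_def)
      then show ?thesis
      proof
        assume p: "fst x \<noteq> 0"
        have h1: "dQ (dP (snd F)) x = - (complex_of_real (snd x) * dQ (dQ (snd F)) x) / complex_of_real (fst x)"
          using he p by (simp add: field_simps eq_neg_iff_add_eq_0)
        have h2: "dP (dP (snd F)) x = - (complex_of_real (snd x) * dQ (dP (snd F)) x) / complex_of_real (fst x)"
          using hd p by (simp add: field_simps eq_neg_iff_add_eq_0)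
        show ?thesis
          unfolding a(1,3) apply (simp add: ops sm[OF S(1)] sm[OF S(2)] sm[OF S(3)] sm[OF S(4)] sm[OF S(5)] sm[OF S(6)] z)
          apply (simp only: hc h2)
          apply (simp only: h1)
          using p by (simp add: field_simps)
      next
        assume q: "snd x \<noteq> 0"
        have h1: "dQ (dP (snd F)) x = - (complex_of_real (fst x) * dP (dP (snd F)) x) / complex_of_real (snd x)"
          using hd q by (simp add: field_simps eq_neg_iff_add_eq_0)
        have h2: "dQ (dQ (snd F)) x = - (complex_of_real (fst x) * dQ (dP (snd F)) x) / complex_of_real (snd x)"
          using he q by (simp add: field_simps eq_neg_iff_add_eq_0)
        show ?thesis
          unfolding a(1,3) apply (simp add: ops sm[OF S(1)] sm[OF S(2)] sm[OF S(3)] sm[OF S(4)] sm[OF S(5)] sm[OF S(6)] z)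
          apply (simp only: hc h2)
          apply (simp only: h1)
          using q by (simp add: field_simps)
      qed
    qed
  qed
qed

end
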